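(* Let $\theta>0$, $q>0$, let $r$ be a positive integer, and let $\mathcal{U}$ be a distribution on $[0,1]$ that is $(\theta,q)$-polynomially bounded below at 1. Let $\phi:[m]\to[n]$ be any fixed allocation of $m$ items to $n$ agents, let $z_i=|\phi^{-1}(i)|$, and let the utilities $u_i(j)$ ($i\in[n]$, $j\in[m]$) be drawn independently from $\mathcal{U}$. Let $\rho:=\left(1-\left(\theta\left(\frac{1}{r+1}\right)^q\right)^{r+1}\right)^{1/4}$. Then for every pair of agents $i,i'$ with $z_i\leq r<z_{i'}$, $$\Pr\left[\sum_{j\in\phi^{-1}(i')}u_i(j)\leq z_i\right]\leq\rho^{z_{i'}/r}.$$
   Context: A distribution $\mathcal{U}$ on $[0,1]$ is $(\theta,q)$-polynomially bounded below at 1 if for every $\alpha\in(0,1]$, $\Pr_{u\sim\mathcal{U}}[u>1-\alpha]\geq\theta\alpha^q$ (this forces $\theta\leq 1$). An allocation $\phi:[m]\to[n]$ assigns item $j$ to agent $\phi(j)$. *)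

theory Defs
  imports "HOL-Probability.Probability"
begin

definition distribution_on_unit :: "real measure \<Rightarrow> bool" where
  "distribution_on_unit U \<longleftrightarrow> prob_space U \<and> sets U = sets borel \<and> emeasure U {0..1} = 1"

definition poly_bounded_below :: "real \<Rightarrow> real \<Rightarrow> real measure \<Rightarrow> bool" where
  "poly_bounded_below \<theta> q U \<longleftrightarrow>
     (\<forall>\<alpha>. 0 < \<alpha> \<and> \<alpha> \<le> 1 \<longrightarrow> measure U {u. u > 1 - \<alpha>} \<ge> \<theta> * \<alpha> powr q)"

text \<open>Items are {0..<m}, agents {0..<n}; the bundle of agent i under phi.\<close>
definition agent_bundle :: "(nat \<Rightarrow> nat) \<Rightarrow> nat \<Rightarrow> nat \<Rightarrow> nat set" where
  "agent_bundle \<phi> m i = {j \<in> {..<m}. \<phi> j = i}"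

definition util_space :: "nat \<Rightarrow> nat \<Rightarrow> real measure \<Rightarrow> (nat \<times> nat \<Rightarrow> real) measure" where
  "util_space n m U = PiM ({..<n} \<times> {..<m}) (\<lambda>_. U)"

end

theory Submission
  imports Defs
begin

lemma coord_indep:
  fixes U :: "real measure" and I :: "'i set"
  assumes U: "prob_space U" "sets U = sets borel" and I: "I \<noteq> {}"
  shows "prob_space.indep_vars (PiM I (\<lambda>_. U)) (\<lambda>_. U) (\<lambda>x \<omega>. \<omega> x) I"
proof -
  interpret U: prob_space U by (rule U(1))
  interpret PS: product_prob_space "\<lambda>_. U" I by unfold_locales
  have spU: "space U = UNIV" using sets_eq_imp_space_eq[OF U(2)] by simp
  have rv: "(\<lambda>\<omega>. \<omega> x) \<in> measurable (PiM I (\<lambda>_. U)) U" for x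
  proof (cases "x \<in> I")
    case True then show ?thesis by (rule measurable_component_singleton)
  next
    case False
    have "\<forall>\<omega>\<in>space (PiM I (\<lambda>_. U)). \<omega> x = undefined"
      using False by (auto simp: space_PiM PiE_def extensional_def)
    then have eq: "(\<lambda>\<omega>. \<omega> x) \<in> measurable (PiM I (\<lambda>_. U)) U \<longleftrightarrow> (\<lambda>\<omega>. undefined) \<in> measurable (PiM I (\<lambda>_. U)) U"
      by (intro measurable_cong) auto
    have "(\<lambda>\<omega>. undefined) \<in> measurable (PiM I (\<lambda>_. U)) U"
      by (rule measurable_const) (simp add: spU)
    then show ?thesis using eq by simp
  qed
  have "distr (PiM I (\<lambda>_. U)) (PiM I (\<lambda>_. U)) (\<lambda>\<omega>. \<lambda>x\<in>I. \<omega> x) = distr (PiM I (\<lambda>_. U)) (PiM I (\<lambda>_. U)) (\<lambda>\<omega>. \<omega>)"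
    by (rule distr_cong) (auto simp: space_PiM PiE_def extensional_restrict)
  also have "\<dots> = PiM I (\<lambda>_. U)" by (rule distr_id)
  also have "\<dots> = PiM I (\<lambda>x. distr (PiM I (\<lambda>_. U)) U (\<lambda>\<omega>. \<omega> x))"
    by (rule PiM_cong) (auto simp: PS.PiM_component)
  finally show ?thesis
    by (subst PS.indep_vars_iff_distr_eq_PiM[OF I]) (auto simp: rv)
qed

theorem lemma5:
  fixes \<theta> q :: real and r n m i i' :: nat and U :: "real measure" and \<phi> :: "nat \<Rightarrow> nat"
  assumes "\<theta> > 0" and "q > 0" and "r > 0"
    and "distribution_on_unit U" and "poly_bounded_below \<theta> q U"
    and "\<forall>j<m. \<phi> j < n"
    and "i < n" and "i' < n"
    and "card (agent_bundle \<phi> m i) \<le> r" and "r < card (agent_bundle \<phi> m i')"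
  shows "measure (util_space n m U)
           {u \<in> space (util_space n m U). (\<Sum>j\<in>agent_bundle \<phi> m i'. u (i, j)) \<le> real (card (agent_bundle \<phi> m i))}
         \<le> ((1 - (\<theta> * (1 / (real r + 1)) powr q) ^ (r + 1)) powr (1/4)) powr (real (card (agent_bundle \<phi> m i')) / real r)"
proof -
  define Z where "Z = card (agent_bundle \<phi> m i')"
  define z where "z = card (agent_bundle \<phi> m i)"
  define B' where "B' = agent_bundle \<phi> m i'"
  define I where "I = {..<n} \<times> {..<m}"
  define k where "k = Z div (r + 1)"
  define c where "c = 1 - 1 / (real r + 1)"
  define M where "M = util_space n m U"
  have M_def': "M = PiM I (\<lambda>_. U)" by (simp add: M_def util_space_def I_def)
  have U: "prob_space U" "sets U = sets borel" "emeasure U {0..1} = 1"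
    using assms(4) by (auto simp: distribution_on_unit_def)
  interpret U: prob_space U by (rule U(1))
  interpret PS: product_prob_space "\<lambda>_. U" I by unfold_locales
  interpret P: prob_space M unfolding M_def' by (rule prob_space_PiM) (simp add: U)
  have spU: "space U = UNIV" using sets_eq_imp_space_eq[OF U(2)] by simp
  have finB': "finite B'" by (simp add: B'_def agent_bundle_def)
  have B'sub: "B' \<subseteq> {..<m}" by (auto simp: B'_def agent_bundle_def)
  have ZB': "card B' = Z" by (simp add: B'_def Z_def)
  have Zr: "r < Z" using assms(10) by (simp add: Z_def)
  have zr: "z \<le> r" using assms(9) by (simp add: z_def)
  have k1: "1 \<le> k" using Zr by (simp add: k_def div_greater_zero_iff Suc_le_eq)
  have Zk: "k * (r + 1) \<le> Z" unfolding k_def by (rule div_times_less_eq_dividend)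
  have Z4: "Z \<le> 4 * r * k"
  proof -
    have "Z = k * (r + 1) + Z mod (r + 1)" unfolding k_def by (metis div_mult_mod_eq)
    moreover have "Z mod (r + 1) \<le> r" using mod_less_divisor[of "r + 1" Z] by simp
    ultimately have "Z \<le> k * (r + 1) + r" by linarith
    also have "\<dots> \<le> 4 * r * k"
    proof -
      have a: "r \<le> r * k" using k1 by simp
      have b: "k \<le> r * k" using assms(3) by simp
      have e1: "k * (r + 1) = r * k + k" by (simp add: algebra_simps)
      have e2: "4 * r * k = 4 * (r * k)" by simp
      show ?thesis unfolding e1 e2 using a b by linarith
    qed
    finally show ?thesis .
  qed
  obtain f where f: "bij_betw f {0..<Z} B'" using ex_bij_betw_nat_finite[OF finB'] ZB' by auto
  define Blk where "Blk b = f ` {b * (r + 1)..<(b + 1) * (r + 1)}" for b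
  define C where "C b = (\<lambda>j. (i, j)) ` Blk b" for b
  have Blk_sub: "Blk b \<subseteq> B'" if "b < k" for b
  proof -
    have "(b + 1) * (r + 1) \<le> k * (r + 1)" using that by (intro mult_right_mono) auto
    then have "{b * (r + 1)..<(b + 1) * (r + 1)} \<subseteq> {0..<Z}" using Zk by auto
    then show ?thesis using f unfolding Blk_def bij_betw_def by auto
  qed
  have card_Blk: "card (Blk b) = r + 1" if "b < k" for b
  proof -
    have "(b + 1) * (r + 1) \<le> k * (r + 1)" using that by (intro mult_right_mono) auto
    then have "{b * (r + 1)..<(b + 1) * (r + 1)} \<subseteq> {0..<Z}" using Zk by auto
    then have "inj_on f {b * (r + 1)..<(b + 1) * (r + 1)}" using f unfolding bij_betw_def
      using inj_on_subset by blast
    then show ?thesis unfolding Blk_def by (simp add: card_image)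
  qed
  have disj_Blk: "Blk a \<inter> Blk b = {}" if "a < k" "b < k" "a \<noteq> b" for a b
  proof -
    have s: "{x * (r + 1)..<(x + 1) * (r + 1)} \<subseteq> {0..<Z}" if "x < k" for x
    proof -
      have "(x + 1) * (r + 1) \<le> k * (r + 1)" using that by (intro mult_right_mono) auto
      then show ?thesis using Zk by auto
    qed
    have d: "{a * (r + 1)..<(a + 1) * (r + 1)} \<inter> {b * (r + 1)..<(b + 1) * (r + 1)} = {}"
    proof (cases "a < b")
      case True
      then have "(a + 1) * (r + 1) \<le> b * (r + 1)" by (intro mult_right_mono) auto
      then show ?thesis by auto
    next
      case False
      then have "(b + 1) * (r + 1) \<le> a * (r + 1)" using that(3) by (intro mult_right_mono) auto
      then show ?thesis by auto
    qed
    have inj: "inj_on f {0..<Z}" using f by (simp add: bij_betw_def)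
    have "Blk a \<inter> Blk b = f ` ({a * (r + 1)..<(a + 1) * (r + 1)} \<inter> {b * (r + 1)..<(b + 1) * (r + 1)})"
      unfolding Blk_def by (rule inj_on_image_Int[OF inj s[OF that(1)] s[OF that(2)], symmetric])
    then show ?thesis by (simp only: d image_empty)
  qed
  have C_sub: "C b \<subseteq> I" if "b < k" for b
    using Blk_sub[OF that] B'sub assms(7) by (auto simp: C_def I_def)
  have card_C: "card (C b) = r + 1" if "b < k" for b
    unfolding C_def by (subst card_image) (auto intro: inj_onI simp: card_Blk[OF that])
  have finC: "finite (C b)" for b unfolding C_def Blk_def by simp
  have disjC: "disjoint_family_on C {..<k}"
    unfolding disjoint_family_on_def C_def using disj_Blk by auto
  have Ine: "I \<noteq> {}"
  proof -
    have "Blk 0 \<noteq> {}" using card_Blk[of 0] k1 by auto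
    then obtain j where "j \<in> B'" using Blk_sub[of 0] k1 by auto
    then show ?thesis using B'sub assms(7) by (auto simp: I_def)
  qed
  have ind0: "P.indep_vars (\<lambda>_. U) (\<lambda>x \<omega>. \<omega> x) I"
    using coord_indep[OF U(1,2) Ine] unfolding M_def' .
  have ind: "P.indep_vars (\<lambda>b. PiM (C b) (\<lambda>_. U)) (\<lambda>b \<omega>. restrict (\<lambda>x. \<omega> x) (C b)) {..<k}"
    by (rule P.indep_vars_restrict[OF ind0 C_sub disjC]) auto
  define G where "G = {x::real. c < x}"
  have G_sets: "G \<in> sets U" unfolding G_def by (simp add: U(2))
  define Pc where "Pc = measure U G"
  define A where "A b = space M - prod_emb I (\<lambda>_. U) (C b) (PiE (C b) (\<lambda>_. G))" for b
  have A_eq: "A b = {\<omega> \<in> space M. \<not> (\<forall>x\<in>C b. c < \<omega> x)}" for b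
    unfolding A_def prod_emb_def by (auto simp: M_def' space_PiM G_def PiE_iff extensional_def)
  have A_sets: "A b \<in> P.events" if "b < k" for b
    unfolding A_def M_def' using C_sub[OF that] finC G_sets
    by (intro sets.compl_sets sets_PiM_I) auto
  have A_ev: "A b \<in> sigma_sets (space M) {(\<lambda>\<omega>. restrict (\<lambda>x. \<omega> x) (C b)) -` S \<inter> space M | S. S \<in> sets (PiM (C b) (\<lambda>_. U))}"
    if "b < k" for b
  proof -
    have "A b = (\<lambda>\<omega>. restrict (\<lambda>x. \<omega> x) (C b)) -` (space (PiM (C b) (\<lambda>_. U)) - PiE (C b) (\<lambda>_. G)) \<inter> space M"
      unfolding A_def prod_emb_def by (auto simp: M_def' space_PiM spU PiE_iff extensional_def)
    moreover have "space (PiM (C b) (\<lambda>_. U)) - PiE (C b) (\<lambda>_. G) \<in> sets (PiM (C b) (\<lambda>_. U))"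
      by (intro sets.compl_sets sets_PiM_I_finite) (auto simp: finC G_sets)
    ultimately show ?thesis by (intro sigma_sets.Basic) blast
  qed
  have indA: "P.prob (\<Inter>b\<in>{..<k}. A b) = (\<Prod>b\<in>{..<k}. P.prob (A b))"
  proof -
    have iss: "P.indep_sets (\<lambda>b. sigma_sets (space M) {(\<lambda>\<omega>. restrict (\<lambda>x. \<omega> x) (C b)) -` S \<inter> space M | S. S \<in> sets (PiM (C b) (\<lambda>_. U))}) {..<k}"
      using ind unfolding P.indep_vars_def by blast
    show ?thesis
    proof (rule P.indep_setsD[OF iss])
      have "0 \<in> {..<k}" using k1 by simp
      then show "{..<k} \<noteq> {}" by blast
    qed (use A_ev in auto)
  qed
  have probA: "P.prob (A b) = 1 - Pc ^ (r + 1)" if "b < k" for b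
  proof -
    have "P.prob (prod_emb I (\<lambda>_. U) (C b) (PiE (C b) (\<lambda>_. G))) = (\<Prod>x\<in>C b. measure U G)"
      using PS.measure_PiM_emb[of "C b" "\<lambda>_. G"] C_sub[OF that] finC G_sets unfolding M_def' by simp
    also have "\<dots> = Pc ^ (r + 1)" by (simp add: Pc_def card_C[OF that])
    finally have e: "P.prob (prod_emb I (\<lambda>_. U) (C b) (PiE (C b) (\<lambda>_. G))) = Pc ^ (r + 1)" .
    have "prod_emb I (\<lambda>_. U) (C b) (PiE (C b) (\<lambda>_. G)) \<in> P.events"
      unfolding M_def' using C_sub[OF that] finC G_sets by (intro sets_PiM_I) auto
    then show ?thesis unfolding A_def using e by (simp add: P.prob_compl)
  qed
  have U01: "measure U {0..1} = 1" using U(3) by (simp add: U.emeasure_eq_measure)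
  have U0: "measure U {x::real. x < 0} = 0"
  proof -
    have "measure U (space U - {0..1}) = 0" using U.prob_compl[of "{0..1}"] U01 U(2) by simp
    moreover have "measure U {x::real. x < 0} \<le> measure U (space U - {0..1})"
      by (rule U.finite_measure_mono) (auto simp: spU U(2))
    ultimately show ?thesis using measure_nonneg[of U "{x::real. x < 0}"] by linarith
  qed
  have neg_sets: "{x::real. x < 0} \<in> sets U"
  proof -
    have "{x::real. x < 0} = {..<0}" by auto
    then show ?thesis using borel_open[OF open_lessThan, of "0::real"] by (simp add: U(2))
  qed
  define N where "N = (\<Union>j\<in>B'. {\<omega>\<in>space M. \<omega> (i, j) < 0})"
  have Nj_sets: "{\<omega>\<in>space M. \<omega> (i, j) < 0} \<in> P.events" if "j \<in> B'" for j
  proof -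
    have ij: "(i, j) \<in> I" using that B'sub assms(7) by (auto simp: I_def)
    show ?thesis unfolding M_def' by (rule sets_Collect_single'[OF ij]) (simp add: spU neg_sets)
  qed
  have Nj: "P.prob {\<omega>\<in>space M. \<omega> (i, j) < 0} = 0" if "j \<in> B'" for j
  proof -
    have ij: "(i, j) \<in> I" using that B'sub assms(7) by (auto simp: I_def)
    have "emeasure M {\<omega>\<in>space M. \<omega> (i, j) \<in> {x::real. x < 0}} = emeasure U {x::real. x < 0}"
      unfolding M_def' by (rule PS.emeasure_PiM_Collect_single[OF ij neg_sets])
    then show ?thesis using U0 by (simp add: measure_def)
  qed
  have N_sets: "N \<in> P.events" unfolding N_def using Nj_sets finB' by auto
  have probN: "P.prob N = 0"
  proof -
    have "P.prob N \<le> (\<Sum>j\<in>B'. P.prob {\<omega>\<in>space M. \<omega> (i, j) < 0})"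
      unfolding N_def by (rule measure_UNION_le[OF finB' Nj_sets])
    also have "\<dots> = 0" using Nj by simp
    finally show ?thesis using measure_nonneg[of M N] by linarith
  qed
  define E where "E = {u \<in> space M. (\<Sum>j\<in>B'. u (i, j)) \<le> real z}"
  have Esub: "E \<subseteq> (\<Inter>b\<in>{..<k}. A b) \<union> N"
  proof
    fix \<omega> assume "\<omega> \<in> E"
    then have om: "\<omega> \<in> space M" and sle: "(\<Sum>j\<in>B'. \<omega> (i, j)) \<le> real z" by (auto simp: E_def)
    show "\<omega> \<in> (\<Inter>b\<in>{..<k}. A b) \<union> N"
    proof (rule ccontr)
      assume H: "\<omega> \<notin> (\<Inter>b\<in>{..<k}. A b) \<union> N"
      then have nn: "\<forall>j\<in>B'. 0 \<le> \<omega> (i, j)" using om by (auto simp: N_def not_less)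
      from H obtain b where b: "b < k" "\<omega> \<notin> A b" by auto
      then have allC: "\<forall>x\<in>C b. c < \<omega> x" using om A_eq by auto
      then have allB: "\<forall>j\<in>Blk b. c < \<omega> (i, j)" by (auto simp: C_def)
      have finBlk: "finite (Blk b)" by (simp add: Blk_def)
      have neBlk: "Blk b \<noteq> {}" using card_Blk[OF b(1)] by auto
      have "real r = (\<Sum>j\<in>Blk b. c)"
        using card_Blk[OF b(1)] by (simp add: c_def field_simps)
      also have "\<dots> < (\<Sum>j\<in>Blk b. \<omega> (i, j))"
        by (rule sum_strict_mono[OF finBlk neBlk]) (use allB in auto)
      also have "\<dots> \<le> (\<Sum>j\<in>B'. \<omega> (i, j))"
        by (rule sum_mono2[OF finB' Blk_sub[OF b(1)]]) (use nn in auto)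
      finally show False using sle zr by (simp add: of_nat_mono)
    qed
  qed
  have INT_sets: "(\<Inter>b\<in>{..<k}. A b) \<in> P.events"
  proof (intro sets.finite_INT)
    have "0 \<in> {..<k}" using k1 by simp
    then show "{..<k} \<noteq> {}" by blast
  qed (use A_sets in auto)
  have "measure M E \<le> P.prob ((\<Inter>b\<in>{..<k}. A b) \<union> N)"
    by (rule P.finite_measure_mono[OF Esub]) (use INT_sets N_sets in auto)
  also have "\<dots> \<le> P.prob (\<Inter>b\<in>{..<k}. A b) + P.prob N"
    by (rule measure_Un_le[OF INT_sets N_sets])
  also have "\<dots> = (1 - Pc ^ (r + 1)) ^ k"
    using indA probA probN by simp
  finally have main: "measure M E \<le> (1 - Pc ^ (r + 1)) ^ k" .
  define p where "p = \<theta> * (1 / (real r + 1)) powr q"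
  have p0: "0 < p" using assms(1) by (simp add: p_def)
  have pPc: "p \<le> Pc"
  proof -
    have "0 < 1 / (real r + 1)" "1 / (real r + 1) \<le> 1" by auto
    then have "measure U {u. u > 1 - 1 / (real r + 1)} \<ge> \<theta> * (1 / (real r + 1)) powr q"
      using assms(5) unfolding poly_bounded_below_def by blast
    then show ?thesis by (simp add: p_def Pc_def G_def c_def)
  qed
  have Pc1: "Pc \<le> 1" by (simp add: Pc_def)
  define \<beta> where "\<beta> = 1 - p ^ (r + 1)"
  have b1: "(1 - Pc ^ (r + 1)) ^ k \<le> \<beta> ^ k"
  proof (rule power_mono)
    show "1 - Pc ^ (r + 1) \<le> \<beta>" unfolding \<beta>_def using power_mono[OF pPc, of "r + 1"] p0 by simp
    show "0 \<le> 1 - Pc ^ (r + 1)" using power_le_one[OF _ Pc1, of "r + 1"] p0 pPc by simp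
  qed
  have \<beta>0: "0 \<le> \<beta>" unfolding \<beta>_def using power_le_one[of p "r + 1"] p0 pPc Pc1 by simp
  have \<beta>1: "\<beta> \<le> 1" unfolding \<beta>_def using p0 by simp
  have Z4r: "real Z \<le> 4 * real r * real k" using Z4 by (metis of_nat_le_iff of_nat_mult of_nat_numeral)
  have expo: "1 / 4 * (real Z / real r) \<le> real k"
  proof -
    have "real Z / real r \<le> 4 * real k" using Z4r assms(3) by (simp add: divide_le_eq algebra_simps)
    then show ?thesis by linarith
  qed
  have b2: "\<beta> ^ k \<le> (\<beta> powr (1/4)) powr (real Z / real r)"
  proof (cases "\<beta> = 0")
    case True then show ?thesis using k1 by (simp add: power_0_left)
  next
    case False
    then have bp: "0 < \<beta>" using \<beta>0 by simp
    have "\<beta> ^ k = \<beta> powr real k" using bp by (simp add: powr_realpow)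
    also have "\<dots> \<le> \<beta> powr (1 / 4 * (real Z / real r))" by (rule powr_mono'[OF expo \<beta>0 \<beta>1])
    also have "\<dots> = (\<beta> powr (1/4)) powr (real Z / real r)" by (simp add: powr_powr)
    finally show ?thesis .
  qed
  have "measure M E \<le> (\<beta> powr (1/4)) powr (real Z / real r)" using main b1 b2 by linarith
  then show ?thesis by (simp add: M_def E_def B'_def z_def Z_def \<beta>_def p_def)
qed

end
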